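(* Let $(M,g)$ be a Ricci-flat Riemannian $4$-manifold. For $p \in M$ let $K_{max}(p)$ (respectively $K_{min}(p)$) denote the maximum (respectively the minimum) of the sectional curvatures of $2$-planes in $T_pM$. Then $$-\tfrac{1}{2}K_{min}(p) \le K_{max}(p) \le -2K_{min}(p)$$ for every $p \in M$. *)

theory Defs
  imports "HOL-Analysis.Analysis"
begin

text \<open>Pointwise model: the tangent space T_pM of a Riemannian 4-manifold is a
  4-dimensional Euclidean space; the Riemann curvature tensor at p is an
  algebraic curvature tensor R(x,y,z,w) = g(R(x,y)z, w), where
  R(x,y) = nabla_x nabla_y - nabla_y nabla_x - nabla_[x,y].\<close>

definition alg_curv_tensor :: "('v::euclidean_space \<Rightarrow> 'v \<Rightarrow> 'v \<Rightarrow> 'v \<Rightarrow> real) \<Rightarrow> bool" where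
  "alg_curv_tensor R \<longleftrightarrow>
     (\<forall>y z w. linear (\<lambda>x. R x y z w)) \<and>
     (\<forall>x z w. linear (\<lambda>y. R x y z w)) \<and>
     (\<forall>x y w. linear (\<lambda>z. R x y z w)) \<and>
     (\<forall>x y z. linear (\<lambda>w. R x y z w)) \<and>
     (\<forall>x y z w. R y x z w = - R x y z w) \<and>
     (\<forall>x y z w. R x y w z = - R x y z w) \<and>
     (\<forall>x y z w. R z w x y = R x y z w) \<and>
     (\<forall>x y z w. R x y z w + R y z x w + R z x y w = 0)"

definition ricci :: "('v::euclidean_space \<Rightarrow> 'v \<Rightarrow> 'v \<Rightarrow> 'v \<Rightarrow> real) \<Rightarrow> 'v \<Rightarrow> 'v \<Rightarrow> real" where
  "ricci R y z = (\<Sum>e\<in>Basis. R e y z e)"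

definition ricci_flat :: "('v::euclidean_space \<Rightarrow> 'v \<Rightarrow> 'v \<Rightarrow> 'v \<Rightarrow> real) \<Rightarrow> bool" where
  "ricci_flat R \<longleftrightarrow> (\<forall>y z. ricci R y z = 0)"

definition sectional :: "('v::euclidean_space \<Rightarrow> 'v \<Rightarrow> 'v \<Rightarrow> 'v \<Rightarrow> real) \<Rightarrow> 'v \<Rightarrow> 'v \<Rightarrow> real" where
  "sectional R x y = R x y y x / ((norm x)\<^sup>2 * (norm y)\<^sup>2 - (x \<bullet> y)\<^sup>2)"

definition sectional_curvatures :: "('v::euclidean_space \<Rightarrow> 'v \<Rightarrow> 'v \<Rightarrow> 'v \<Rightarrow> real) \<Rightarrow> real set" where
  "sectional_curvatures R = {sectional R x y | x y. independent {x, y} \<and> x \<noteq> y}"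

definition K_max :: "('v::euclidean_space \<Rightarrow> 'v \<Rightarrow> 'v \<Rightarrow> 'v \<Rightarrow> real) \<Rightarrow> real" where
  "K_max R = Sup (sectional_curvatures R)"

definition K_min :: "('v::euclidean_space \<Rightarrow> 'v \<Rightarrow> 'v \<Rightarrow> 'v \<Rightarrow> real) \<Rightarrow> real" where
  "K_min R = Inf (sectional_curvatures R)"

end

theory Submission
  imports Defs
begin

context
  fixes R :: "'v::euclidean_space \<Rightarrow> 'v \<Rightarrow> 'v \<Rightarrow> 'v \<Rightarrow> real"
  assumes AC: "alg_curv_tensor R"
begin

lemma ACc: "(\<forall>y z w. linear (\<lambda>x. R x y z w)) \<and>
     (\<forall>x z w. linear (\<lambda>y. R x y z w)) \<and>
     (\<forall>x y w. linear (\<lambda>z. R x y z w)) \<and>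
     (\<forall>x y z. linear (\<lambda>w. R x y z w)) \<and>
     (\<forall>x y z w. R y x z w = - R x y z w) \<and>
     (\<forall>x y z w. R x y w z = - R x y z w) \<and>
     (\<forall>x y z w. R z w x y = R x y z w) \<and>
     (\<forall>x y z w. R x y z w + R y z x w + R z x y w = 0)"
  using AC unfolding alg_curv_tensor_def by assumption
lemma lin1: "linear (\<lambda>x. R x y z w)" using ACc by (elim conjE allE)
lemma lin2: "linear (\<lambda>y. R x y z w)" using ACc by (elim conjE allE)
lemma lin3: "linear (\<lambda>z. R x y z w)" using ACc by (elim conjE allE)
lemma lin4: "linear (\<lambda>w. R x y z w)" using ACc by (elim conjE allE)
lemma asym1: "R y x z w = - R x y z w" using ACc by (elim conjE allE)
lemma asym2: "R x y w z = - R x y z w" using ACc by (elim conjE allE)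
lemma pairsym: "R z w x y = R x y z w" using ACc by (elim conjE allE)

lemma Rxx: "R x x z w = 0" using asym1[of x x z w] by linarith
lemma Rzz: "R x y z z = 0" using asym2[of x y z z] by linarith
lemma R_add1: "R (x+x') y z w = R x y z w + R x' y z w" by (rule linear_add[OF lin1])
lemma R_add2: "R x (y+y') z w = R x y z w + R x y' z w" by (rule linear_add[OF lin2])
lemma R_add3: "R x y (z+z') w = R x y z w + R x y z' w" by (rule linear_add[OF lin3])
lemma R_add4: "R x y z (w+w') = R x y z w + R x y z w'" by (rule linear_add[OF lin4])
lemma R_sc1: "R (c *\<^sub>R x) y z w = c * R x y z w" using linear_scale[OF lin1] by simp
lemma R_sc2: "R x (c *\<^sub>R y) z w = c * R x y z w" using linear_scale[OF lin2] by simp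
lemma R_sc3: "R x y (c *\<^sub>R z) w = c * R x y z w" using linear_scale[OF lin3] by simp
lemma R_sc4: "R x y z (c *\<^sub>R w) = c * R x y z w" using linear_scale[OF lin4] by simp
lemmas R_simps = R_add1 R_add2 R_add3 R_add4 R_sc1 R_sc2 R_sc3 R_sc4 Rxx Rzz

lemma orth_reduce:
  assumes "independent {x, y}" "x \<noteq> y"
  obtains u v where "norm u = 1" "norm v = 1" "u \<bullet> v = 0" "sectional R x y = R u v v u"
proof -
  have x0: "x \<noteq> 0" using assms dependent_zero by blast
  define a where "a = norm x"
  define u where "u = x /\<^sub>R a"
  have a0: "a > 0" using x0 a_def by auto
  have nu: "norm u = 1" using a0 u_def a_def by simp
  have xu: "x = a *\<^sub>R u" using a0 u_def by simp
  define b where "b = y \<bullet> u"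
  define y' where "y' = y - b *\<^sub>R u"
  have y'0: "y' \<noteq> 0"
  proof
    assume "y' = 0"
    then have "y = (b / a) *\<^sub>R x" using xu a0 y'_def by simp
    then have "y \<in> span ({x,y} - {y})" using assms(2) by (simp add: span_mul span_base)
    then show False using assms(1) unfolding dependent_def by blast
  qed
  define c where "c = norm y'"
  define v where "v = y' /\<^sub>R c"
  have c0: "c > 0" using y'0 c_def by auto
  have nv: "norm v = 1" using c0 v_def c_def by simp
  have yv: "y = b *\<^sub>R u + c *\<^sub>R v" using c0 v_def y'_def by simp
  have uu: "u \<bullet> u = 1" using nu by (simp add: dot_square_norm)
  have vv: "v \<bullet> v = 1" using nv by (simp add: dot_square_norm)
  have uv: "u \<bullet> v = 0"
  proof -
    have "u \<bullet> y' = 0" using uu by (simp add: y'_def b_def inner_diff_right inner_commute)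
    then show ?thesis using v_def by simp
  qed
  have num: "R x y y x = a^2 * c^2 * R u v v u"
    unfolding xu yv by (simp add: R_simps algebra_simps power2_eq_square)
  have den: "(norm x)\<^sup>2 * (norm y)\<^sup>2 - (x \<bullet> y)\<^sup>2 = a^2 * c^2"
    unfolding power2_norm_eq_inner xu yv
    by (simp add: inner_add_left inner_add_right uu vv uv inner_commute[of v u] algebra_simps power2_eq_square)
  have "sectional R x y = R u v v u"
    unfolding sectional_def num den using a0 c0 by simp
  then show ?thesis using that nu nv uv by blast
qed


lemma trace_basis:
  assumes B: "pairwise orthogonal B" "\<And>f. f \<in> B \<Longrightarrow> norm f = 1" "finite B" "span B = UNIV"
  shows "(\<Sum>f\<in>B. R f u u f) = ricci R u u"
proof -
  have ex: "e = (\<Sum>f\<in>B. (e \<bullet> f) *\<^sub>R f)" for e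
    using orthonormal_basis_expand[OF B(1) B(2) _ B(3), of e] B(4) by simp
  have "ricci R u u = (\<Sum>e\<in>Basis. R e u u (\<Sum>f\<in>B. (e \<bullet> f) *\<^sub>R f))"
    unfolding ricci_def by (subst (2) ex) (rule refl)
  also have "\<dots> = (\<Sum>e\<in>Basis. \<Sum>f\<in>B. (e \<bullet> f) * R e u u f)"
    by (simp add: linear_sum[OF lin4] R_simps)
  also have "\<dots> = (\<Sum>f\<in>B. \<Sum>e\<in>Basis. (f \<bullet> e) * R e u u f)"
    by (subst sum.swap) (simp add: inner_commute)
  also have "\<dots> = (\<Sum>f\<in>B. R (\<Sum>e\<in>Basis. (f \<bullet> e) *\<^sub>R e) u u f)"
    by (simp add: linear_sum[OF lin1] R_simps)
  also have "\<dots> = (\<Sum>f\<in>B. R f u u f)"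
    by (simp add: euclidean_representation)
  finally show ?thesis by simp
qed

lemma complete_pair:
  assumes D: "DIM('v) = 4" and RF: "ricci_flat R"
    and u: "norm u = 1" and v: "norm v = 1" and uv: "u \<bullet> v = 0"
  obtains w1 w2 where "norm w1 = 1" "norm w2 = 1" "u \<bullet> w1 = 0" "u \<bullet> w2 = 0"
    "R u v v u + R u w1 w1 u + R u w2 w2 u = 0"
proof -
  define S where "S = {y. \<forall>x\<in>{u,v}. orthogonal x y}"
  have sS: "subspace S" unfolding S_def by (rule subspace_orthogonal_to_vectors)
  obtain W where W: "W \<subseteq> S" "pairwise orthogonal W" "\<And>x. x \<in> W \<Longrightarrow> norm x = 1"
      "independent W" "card W = dim S" "span W = S"
    using orthonormal_basis_subspace[OF sS] by blast
  have fW: "finite W" using W(4) independent_imp_finite by blast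
  define B where "B = {u,v} \<union> W"
  have uvne: "u \<noteq> v" using u uv by (auto simp: dot_square_norm)
  have uW: "u \<notin> W" "v \<notin> W" using W(1) u v uv
    by (auto simp: S_def orthogonal_def dot_square_norm[symmetric])
  have Worth: "w \<bullet> u = 0" "w \<bullet> v = 0" if "w \<in> W" for w
    using W(1) that by (auto simp: S_def orthogonal_def inner_commute)
  have pB: "pairwise orthogonal B"
    using W(2) Worth uv unfolding B_def pairwise_def orthogonal_def
    by (auto simp: inner_commute)
  have nB: "\<And>f. f \<in> B \<Longrightarrow> norm f = 1" using u v W(3) B_def by auto
  have fB: "finite B" using fW B_def by simp
  have spB: "span B = UNIV"
  proof -
    have "x \<in> span B" for x
    proof -
      obtain y z where yz: "y \<in> span {u,v}" "\<And>w. w \<in> span {u,v} \<Longrightarrow> orthogonal z w" "x = y + z"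
        using orthogonal_subspace_decomp_exists[of "{u,v}" x] by blast
      have "z \<in> S" unfolding S_def using yz(2)[of u] yz(2)[of v]
        by (auto simp: span_base orthogonal_commute)
      then have "z \<in> span B" using W(6) span_mono[of W B] B_def by auto
      moreover have "y \<in> span B" using yz(1) span_mono[of "{u,v}" B] B_def by auto
      ultimately show ?thesis using yz(3) span_add by blast
    qed
    then show ?thesis by auto
  qed
  have iB: "independent B"
    by (rule pairwise_orthogonal_independent[OF pB]) (use nB in force)
  have "card B = DIM('v)"
    using dim_eq_card[of B UNIV] spB iB by (simp add: dim_UNIV)
  moreover have "card B = 2 + card W"
    unfolding B_def using fW uW uvne by (simp add: card_Un_disjoint)
  ultimately have "card W = 2" using D by simp
  then obtain w1 w2 where Wd: "W = {w1, w2}" "w1 \<noteq> w2" by (meson card_2_iff)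
  have ne: "u \<noteq> w1" "u \<noteq> w2" "v \<noteq> w1" "v \<noteq> w2" using uW Wd by auto
  have "0 = ricci R u u" using RF unfolding ricci_flat_def by simp
  also have "\<dots> = (\<Sum>f\<in>B. R f u u f)" using trace_basis[OF pB nB fB spB] by simp
  also have "\<dots> = R v u u v + R w1 u u w1 + R w2 u u w2"
    unfolding B_def Wd using ne uvne Wd(2) by (simp add: R_simps)
  also have "\<dots> = R u v v u + R u w1 w1 u + R u w2 w2 u"
    by (simp add: pairsym[of v u u v] pairsym[of w1 u u w1] pairsym[of w2 u u w2])
  finally have "R u v v u + R u w1 w1 u + R u w2 w2 u = 0" by simp
  moreover have "u \<bullet> w1 = 0" "u \<bullet> w2 = 0" using Worth(1)[of w1] Worth(1)[of w2] Wd by (simp_all add: inner_commute)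
  ultimately show ?thesis using that W(3) Wd by auto
qed


lemma expand1: "R x y z w = (\<Sum>i\<in>Basis. (x \<bullet> i) * R i y z w)"
proof -
  have "R x y z w = R (\<Sum>i\<in>Basis. (x \<bullet> i) *\<^sub>R i) y z w" by (simp add: euclidean_representation)
  also have "\<dots> = (\<Sum>i\<in>Basis. (x \<bullet> i) * R i y z w)" by (simp add: linear_sum[OF lin1] R_simps)
  finally show ?thesis .
qed
lemma expand2: "R x y z w = (\<Sum>i\<in>Basis. (y \<bullet> i) * R x i z w)"
proof -
  have "R x y z w = R x (\<Sum>i\<in>Basis. (y \<bullet> i) *\<^sub>R i) z w" by (simp add: euclidean_representation)
  also have "\<dots> = (\<Sum>i\<in>Basis. (y \<bullet> i) * R x i z w)" by (simp add: linear_sum[OF lin2] R_simps)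
  finally show ?thesis .
qed
lemma expand3: "R x y z w = (\<Sum>i\<in>Basis. (z \<bullet> i) * R x y i w)"
proof -
  have "R x y z w = R x y (\<Sum>i\<in>Basis. (z \<bullet> i) *\<^sub>R i) w" by (simp add: euclidean_representation)
  also have "\<dots> = (\<Sum>i\<in>Basis. (z \<bullet> i) * R x y i w)" by (simp add: linear_sum[OF lin3] R_simps)
  finally show ?thesis .
qed
lemma expand4: "R x y z w = (\<Sum>i\<in>Basis. (w \<bullet> i) * R x y z i)"
proof -
  have "R x y z w = R x y z (\<Sum>i\<in>Basis. (w \<bullet> i) *\<^sub>R i)" by (simp add: euclidean_representation)
  also have "\<dots> = (\<Sum>i\<in>Basis. (w \<bullet> i) * R x y z i)" by (simp add: linear_sum[OF lin4] R_simps)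
  finally show ?thesis .
qed

lemma sum_coef_bound:
  fixes x :: 'v
  assumes "norm x \<le> 1"
  shows "\<bar>\<Sum>i\<in>Basis. (x \<bullet> i) * a i\<bar> \<le> (\<Sum>i\<in>Basis. \<bar>a i\<bar>)"
proof -
  have "\<bar>\<Sum>i\<in>Basis. (x \<bullet> i) * a i\<bar> \<le> (\<Sum>i\<in>Basis. \<bar>(x \<bullet> i) * a i\<bar>)" by (rule sum_abs)
  also have "\<dots> \<le> (\<Sum>i\<in>Basis. \<bar>a i\<bar>)"
  proof (rule sum_mono)
    fix i :: 'v assume "i \<in> Basis"
    then have "\<bar>x \<bullet> i\<bar> \<le> 1" using Basis_le_norm[of i x] assms by linarith
    then show "\<bar>(x \<bullet> i) * a i\<bar> \<le> \<bar>a i\<bar>"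
      by (simp add: abs_mult mult_left_le_one_le)
  qed
  finally show ?thesis .
qed

lemma R_bound:
  assumes "norm x \<le> 1" "norm y \<le> 1" "norm z \<le> 1" "norm w \<le> 1"
  shows "\<bar>R x y z w\<bar> \<le> (\<Sum>i\<in>Basis. \<Sum>j\<in>Basis. \<Sum>k\<in>Basis. \<Sum>l\<in>Basis. \<bar>R i j k l\<bar>)"
proof -
  have "\<bar>R x y z w\<bar> \<le> (\<Sum>i\<in>Basis. \<bar>R i y z w\<bar>)"
    by (subst expand1) (rule sum_coef_bound[OF assms(1)])
  also have "\<dots> \<le> (\<Sum>i\<in>Basis. \<Sum>j\<in>Basis. \<bar>R i j z w\<bar>)"
    by (rule sum_mono, subst expand2, rule sum_coef_bound[OF assms(2)])
  also have "\<dots> \<le> (\<Sum>i\<in>Basis. \<Sum>j\<in>Basis. \<Sum>k\<in>Basis. \<bar>R i j k w\<bar>)"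
    by (rule sum_mono, rule sum_mono, subst expand3, rule sum_coef_bound[OF assms(3)])
  also have "\<dots> \<le> (\<Sum>i\<in>Basis. \<Sum>j\<in>Basis. \<Sum>k\<in>Basis. \<Sum>l\<in>Basis. \<bar>R i j k l\<bar>)"
    by (rule sum_mono, rule sum_mono, rule sum_mono, subst expand4, rule sum_coef_bound[OF assms(4)])
  finally show ?thesis .
qed

lemma orth_mem:
  assumes "norm u = 1" "norm w = 1" "u \<bullet> w = 0"
  shows "R u w w u \<in> sectional_curvatures R"
proof -
  have ne: "u \<noteq> w" using assms by (auto simp: dot_square_norm)
  have "independent {u, w}"
    by (rule pairwise_orthogonal_independent)
       (use assms in \<open>auto simp: pairwise_def orthogonal_def inner_commute\<close>)
  moreover have "sectional R u w = R u w w u" using assms by (simp add: sectional_def)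
  ultimately show ?thesis unfolding sectional_curvatures_def using ne by force
qed

end

theorem corollary2p4:
  fixes R :: "'v::euclidean_space \<Rightarrow> 'v \<Rightarrow> 'v \<Rightarrow> 'v \<Rightarrow> real"
  assumes "DIM('v) = 4"
    and "alg_curv_tensor R"
    and "ricci_flat R"
  shows "- (1/2) * K_min R \<le> K_max R \<and> K_max R \<le> - 2 * K_min R"
proof -
  note AC = assms(2)
  define K where "K = sectional_curvatures R"
  define C where "C = (\<Sum>i\<in>(Basis::'v set). \<Sum>j\<in>Basis. \<Sum>k\<in>Basis. \<Sum>l\<in>Basis. \<bar>R i j k l\<bar>)"
  have rep: "\<exists>u v. norm u = 1 \<and> norm v = 1 \<and> u \<bullet> v = 0 \<and> k = R u v v u" if kK: "k \<in> K" for k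
  proof -
    obtain x y where xy: "k = sectional R x y" "independent {x,y}" "x \<noteq> y"
      using kK unfolding K_def sectional_curvatures_def by blast
    obtain u v where "norm u = 1" "norm v = 1" "u \<bullet> v = 0" "sectional R x y = R u v v u"
      using orth_reduce[OF AC xy(2,3)] by blast
    then show ?thesis using xy(1) by blast
  qed
  have bnd: "\<bar>k\<bar> \<le> C" if kK: "k \<in> K" for k
  proof -
    obtain u v where uv: "norm u = 1" "norm v = 1" "k = R u v v u" using rep[OF kK] by blast
    show ?thesis unfolding uv(3) C_def by (rule R_bound[OF AC]) (simp_all add: uv)
  qed
  have bdd: "bdd_above K" "bdd_below K"
  proof -
    have "\<forall>k\<in>K. k \<le> C" "\<forall>k\<in>K. -C \<le> k" using bnd by (force simp: abs_le_iff)+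
    then show "bdd_above K" "bdd_below K" unfolding bdd_above_def bdd_below_def by blast+
  qed
  have key: "\<exists>k1\<in>K. \<exists>k2\<in>K. k + k1 + k2 = 0" if kK: "k \<in> K" for k
  proof -
    obtain u v where uv: "norm u = 1" "norm v = 1" "u \<bullet> v = 0" "k = R u v v u"
      using rep[OF kK] by blast
    obtain w1 w2 where w: "norm w1 = 1" "norm w2 = 1" "u \<bullet> w1 = 0" "u \<bullet> w2 = 0"
      "R u v v u + R u w1 w1 u + R u w2 w2 u = 0"
      using complete_pair[OF AC assms(1) assms(3) uv(1-3)] by blast
    show ?thesis
      using orth_mem[OF AC uv(1) w(1,3)] orth_mem[OF AC uv(1) w(2,4)] w(5) uv(4)
      unfolding K_def by blast
  qed
  obtain i j :: 'v where ij: "i \<in> Basis" "j \<in> Basis" "i \<noteq> j"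
  proof -
    have "card (Basis::'v set) \<ge> 2" using assms(1) by simp
    then obtain A where "A \<subseteq> (Basis::'v set)" "card A = 2"
      by (meson obtain_subset_with_card_n)
    then show ?thesis using that by (auto simp: card_2_iff)
  qed
  have ne: "K \<noteq> {}"
    using orth_mem[OF AC, of i j] ij by (auto simp: K_def inner_not_same_Basis)
  have up: "Sup K \<le> - 2 * Inf K"
  proof (rule cSup_least[OF ne])
    fix k assume "k \<in> K"
    then obtain k1 k2 where "k1 \<in> K" "k2 \<in> K" "k + k1 + k2 = 0" using key by blast
    moreover have "Inf K \<le> k1" "Inf K \<le> k2" using calculation cInf_lower bdd(2) by blast+
    ultimately show "k \<le> - 2 * Inf K" by linarith
  qed
  have lo: "- 2 * Sup K \<le> Inf K"
  proof (rule cInf_greatest[OF ne])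
    fix k assume "k \<in> K"
    then obtain k1 k2 where "k1 \<in> K" "k2 \<in> K" "k + k1 + k2 = 0" using key by blast
    moreover have "k1 \<le> Sup K" "k2 \<le> Sup K" using calculation cSup_upper bdd(1) by blast+
    ultimately show "- 2 * Sup K \<le> k" by linarith
  qed
  show ?thesis using up lo unfolding K_max_def K_min_def K_def by linarith
qed

end
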